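(* Consider the RLC circuit $-L\dot I=\Gamma V+RI-Bu_s$, $C\dot V=\Gamma^\top I-GV$ and its extended dynamics (obtained by adjoining the time-differentiated equations $-L\ddot I=\Gamma\dot V+R\dot I-B\upsilon_s$, $C\ddot V=\Gamma^\top\dot I-G\dot V$ and $\dot u_s=\upsilon_s$), with extended state $(I,V,\dot I,\dot V,u_s)$ and input $\upsilon_s\in\mathbb{R}^m$. Assume: $L,C$ constant symmetric positive definite; $R,G$ symmetric positive semi-definite; $I,V$ (and $\dot I,\dot V$) are measured; and there exist a constant $V^\star\in\mathbb{R}^\rho_+$, a constant $\bar u_s\in\mathbb{R}^m$ and $\bar I\in\mathbb{R}^\sigma$ with $0=\Gamma V^\star+R\bar I-B\bar u_s$, $0=\Gamma^\top\bar I-GV^\star$. Apply the control $$\upsilon_s=\mu_s-k_iB^\top(I-\bar I)-k_dy_s,\qquad y_s=B^\top\dot I,$$ with scalars $k_d>0$, $k_i>0$ and new input $\mu_s\in\mathbb{R}^m$. Then: (a) the closed-loop system defines a passive map $\mu_s\mapsto y_s$; (b) if $\mu_s=0$ and either (i) $R>0$ and $G>0$, or (ii) $G>0$ and $\Gamma^\top$ has full column rank, then the solution of the closed-loop system asymptotically converges to the set $$\{(I,V,\dot I,\dot V,u_s):\ \dot V=0,\ \dot I=0,\ \dot u_s=0,\ B^\top(I-\bar I)=0\}.$$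
   Context: $I\in\mathbb{R}^\sigma$, $V\in\mathbb{R}^\rho$, $u_s\in\mathbb{R}^m$; $\Gamma\in\mathbb{R}^{\sigma\times\rho}$; $B\in\mathbb{R}^{\sigma\times m}$ has full column rank. A map $\mu\mapsto y$ is passive if there is a storage function $S\ge0$ of the (closed-loop) state with $\dot S\le\mu^\top y$ along trajectories. $R>0$ means symmetric positive definite. *)

theory Defs
  imports "HOL-Analysis.Analysis"
begin

text \<open>Index types: 's (sigma branches, currents I), 'r (rho nodes, voltages V), 'm (m sources).
  A matrix M :: real^'c^'r has rows indexed by 'r and columns indexed by 'c.\<close>

definition sym_pd :: "real^'n^'n \<Rightarrow> bool" where
  "sym_pd M \<longleftrightarrow> transpose M = M \<and> (\<forall>x. x \<noteq> 0 \<longrightarrow> x \<bullet> (M *v x) > 0)"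

definition sym_psd :: "real^'n^'n \<Rightarrow> bool" where
  "sym_psd M \<longleftrightarrow> transpose M = M \<and> (\<forall>x. x \<bullet> (M *v x) \<ge> 0)"

definition full_col_rank :: "real^'c^'r \<Rightarrow> bool" where
  "full_col_rank M \<longleftrightarrow> rank M = CARD('c)"

text \<open>Control law: upsilon_s = mu_s - k_i B^T (I - Ibar) - k_d y_s, with y_s = B^T Idot.\<close>
definition ctrl ::
  "real^'m^'s \<Rightarrow> real \<Rightarrow> real \<Rightarrow> real^'s \<Rightarrow> real^'m \<Rightarrow> real^'s \<Rightarrow> real^'s \<Rightarrow> real^'m" where
  "ctrl B ki kd Ibar mu I Ip = mu - ki *\<^sub>R (transpose B *v (I - Ibar)) - kd *\<^sub>R (transpose B *v Ip)"

definition out_y :: "real^'m^'s \<Rightarrow> real^'s \<Rightarrow> real^'m" where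
  "out_y B Ip = transpose B *v Ip"

text \<open>A solution on [0,\<infinity>) of the closed-loop extended dynamics with extended state
  (I, V, Idot, Vdot, u_s) and new input mu:
   d/dt I = Idot, d/dt V = Vdot,
   -L d/dt Idot = Gamma Vdot + R Idot - B upsilon_s,
    C d/dt Vdot = Gamma^T Idot - G Vdot,
   d/dt u_s = upsilon_s, with upsilon_s given by the control law.\<close>
definition cl_traj ::
  "real^'s^'s \<Rightarrow> real^'r^'r \<Rightarrow> real^'s^'s \<Rightarrow> real^'r^'r \<Rightarrow> real^'r^'s \<Rightarrow> real^'m^'s
   \<Rightarrow> real \<Rightarrow> real \<Rightarrow> real^'s \<Rightarrow> (real \<Rightarrow> real^'m)
   \<Rightarrow> (real \<Rightarrow> real^'s) \<Rightarrow> (real \<Rightarrow> real^'r) \<Rightarrow> (real \<Rightarrow> real^'s) \<Rightarrow> (real \<Rightarrow> real^'r)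
   \<Rightarrow> (real \<Rightarrow> real^'m) \<Rightarrow> bool" where
  "cl_traj L C R G \<Gamma> B ki kd Ibar mu I V Ip Vp u \<longleftrightarrow>
     (\<forall>t\<ge>0.
        (I has_vector_derivative Ip t) (at t within {0..}) \<and>
        (V has_vector_derivative Vp t) (at t within {0..}) \<and>
        (\<exists>Ipp. (Ip has_vector_derivative Ipp) (at t within {0..}) \<and>
               - (L *v Ipp) = \<Gamma> *v Vp t + R *v Ip t - B *v ctrl B ki kd Ibar (mu t) (I t) (Ip t)) \<and>
        (\<exists>Vpp. (Vp has_vector_derivative Vpp) (at t within {0..}) \<and>
               C *v Vpp = transpose \<Gamma> *v Ip t - G *v Vp t) \<and>
        (u has_vector_derivative ctrl B ki kd Ibar (mu t) (I t) (Ip t)) (at t within {0..}))"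

text \<open>Target set {(I,V,Idot,Vdot,u_s). Vdot = 0, Idot = 0, d/dt u_s = 0, B^T(I - Ibar) = 0},
  where (with mu_s = 0) d/dt u_s is the closed-loop value of upsilon_s.\<close>
definition target_set ::
  "real^'m^'s \<Rightarrow> real \<Rightarrow> real \<Rightarrow> real^'s
   \<Rightarrow> ((real^'s) \<times> (real^'r) \<times> (real^'s) \<times> (real^'r) \<times> (real^'m)) set" where
  "target_set B ki kd Ibar =
     {(I, V, Ip, Vp, u). Vp = 0 \<and> Ip = 0 \<and> ctrl B ki kd Ibar 0 I Ip = 0 \<and>
                         transpose B *v (I - Ibar) = 0}"

end

theory Submission
  imports Defs
begin


lemma inner_mat: "(x::real^'n) \<bullet> (M *v y) = (transpose M *v x) \<bullet> (y::real^'m)"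
  by (metis dot_lmul_matrix transpose_transpose vector_transpose_matrix)

lemma inner_sym_mat: "transpose M = M \<Longrightarrow> (x::real^'n) \<bullet> (M *v y) = y \<bullet> (M *v x)"
  by (metis inner_mat inner_commute)

lemma mat_bound: "\<exists>K>0. \<forall>x. norm ((M::real^'n^'m) *v x) \<le> K * norm x"
proof -
  have "bounded_linear ((*v) M)" by simp
  from bounded_linear.pos_bounded[OF this] show ?thesis by (auto simp: mult.commute)
qed

lemma inj_bound: assumes "inj ((*v) (M::real^'n^'m))"
  shows "\<exists>c>0. \<forall>x. c * norm x \<le> norm (M *v x)"
proof -
  have "\<exists>e>0. \<forall>x\<in>UNIV. norm (M *v x) \<ge> e * norm x"
    using injective_imp_isometric[of UNIV "(*v) M"] assms
    by (metis closed_UNIV subspace_UNIV matrix_vector_mul_bounded_linear injD matrix_vector_mult_0_right)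
  then show ?thesis by auto
qed

lemma pos_form_bound: assumes "\<forall>x. x \<noteq> 0 \<longrightarrow> (x::real^'n) \<bullet> (M *v x) > 0"
  shows "\<exists>c>0. \<forall>x. c * (norm x)^2 \<le> x \<bullet> (M *v x)"
proof -
  have cont: "continuous_on (sphere (0::real^'n) 1) (\<lambda>x. x \<bullet> (M *v x))"
    by (intro continuous_intros)
  have ne: "sphere (0::real^'n) 1 \<noteq> {}" by simp
  obtain y where y: "y \<in> sphere 0 1" and ymin: "\<forall>x\<in>sphere 0 1. y \<bullet> (M *v y) \<le> x \<bullet> (M *v x)"
    using continuous_attains_inf[OF compact_sphere ne cont] by blast
  have "y \<noteq> 0" using y by auto
  hence pos: "y \<bullet> (M *v y) > 0" using assms by auto
  have "y \<bullet> (M *v y) * (norm x)^2 \<le> x \<bullet> (M *v x)" for x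
  proof (cases "x = 0")
    case True then show ?thesis by simp
  next
    case False
    define w where "w = (1 / norm x) *\<^sub>R x"
    have "w \<in> sphere 0 1" using False by (simp add: w_def)
    hence "y \<bullet> (M *v y) \<le> w \<bullet> (M *v w)" using ymin by blast
    also have "w \<bullet> (M *v w) = (x \<bullet> (M *v x)) / (norm x)^2"
      by (simp add: w_def matrix_vector_mult_scaleR power2_eq_square)
    finally show ?thesis using False by (simp add: field_simps)
  qed
  thus ?thesis using pos by blast
qed

lemma hvd_mat: "(g has_vector_derivative g') F \<Longrightarrow> ((\<lambda>t. (M::real^'n^'m) *v g t) has_vector_derivative M *v g') F"
  by (rule bounded_linear.has_vector_derivative[OF matrix_vector_mul_bounded_linear])

lemma hvd_inner:
  assumes "(f has_vector_derivative f') (at x within s)" "(g has_vector_derivative g') (at x within s)"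
    "D = f x \<bullet> g' + f' \<bullet> g x"
  shows "((\<lambda>t. f t \<bullet> g t) has_field_derivative D) (at x within s)"
  unfolding has_real_derivative_iff_has_vector_derivative assms(3)
  by (rule bounded_bilinear.has_vector_derivative[OF bounded_bilinear_inner assms(1,2)])

lemma young: "(0::real) < k \<Longrightarrow> x * y \<le> x^2 / k + k * y^2 / 4"
proof -
  assume k: "0 < k"
  have "0 \<le> (x - k * y / 2)^2" by simp
  hence "0 \<le> x^2 - k*x*y + k^2 * y^2/4" by (simp add: power2_eq_square algebra_simps)
  hence "k * (x*y) \<le> x^2 + k^2*y^2/4" by (simp add: algebra_simps)
  hence "x*y \<le> (x^2 + k^2*y^2/4)/k" using k by (simp add: pos_le_divide_eq mult.commute)
  also have "\<dots> = x^2 / k + k * y^2 / 4" using k by (simp add: field_simps power2_eq_square)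
  finally show ?thesis .
qed



lemma eps_choice:
  fixes \<rho> \<theta>2 g k c1 c2 c3 c4 c5 c7 d1 d2 lL lC ki :: real
  assumes p: "0 < \<rho> + \<theta>2" "0 \<le> \<rho>" "0 \<le> \<theta>2" and g: "0 < g" and k: "0 < k"
    and cs: "0 \<le> c1" "0 \<le> c2" "0 \<le> c3" "0 \<le> c4" "0 \<le> c5" "0 \<le> c7" "0 \<le> d1" "0 \<le> d2"
    and l: "0 < lL" "0 < lC" "0 < ki"
  shows "\<exists>e1 e2 \<delta>. 0 < e1 \<and> e1 \<le> 1 \<and> 0 < e2 \<and> 0 < \<delta> \<and>
    (\<forall>\<alpha> \<beta> \<gamma>. - (\<rho> + e1 * \<theta>2) * \<alpha>^2 - g * \<beta>^2
        + e2 * (- k * \<gamma>^2 + c1 * \<beta> * \<gamma> + c2 * \<alpha> * \<gamma> + c3 * \<alpha>^2)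
        + e1 * (c4 * \<alpha> * \<beta> + c5 * \<beta>^2 + c7 * \<beta> * \<gamma>) \<le> - \<delta> * (\<alpha>^2 + \<beta>^2 + \<gamma>^2)) \<and>
    (\<forall>\<alpha> \<beta> \<gamma>. \<bar>e2 * d1 * \<alpha> * \<gamma>\<bar> + \<bar>e1 * d2 * \<alpha> * \<beta>\<bar> \<le> (lL * \<alpha>^2 + lC * \<beta>^2 + ki * \<gamma>^2) / 4)"
proof -
  define p where "p = \<rho> + \<theta>2"
  have pp: "0 < p" using p by (simp add: p_def)
  define Q where "Q = c3 + c2^2/k + 1"
  define \<kappa> where "\<kappa> = p / (4 * Q)"
  have q0: "0 \<le> c2^2/k" using k by simp
  have Q0: "0 < Q" using cs q0 by (simp add: Q_def)
  have kp: "0 < \<kappa>" using pp Q0 by (simp add: \<kappa>_def)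
  have k1: "\<kappa> * (c3 + c2^2/k) \<le> p / 4"
  proof -
    have "\<kappa> * (c3 + c2^2/k) \<le> \<kappa> * Q" using kp by (simp add: Q_def)
    also have "\<dots> = p / 4" using Q0 by (simp add: \<kappa>_def)
    finally show ?thesis .
  qed
  define M where "M = \<kappa> * c1^2 / k + c7^2 / (\<kappa> * k) + c5 + c4^2 / p"
  have M0: "0 \<le> M" using kp k pp cs by (simp add: M_def)
  define \<mu> where "\<mu> = min lL (min lC ki)"
  have mu0: "0 < \<mu>" using l by (simp add: \<mu>_def)
  define N where "N = \<kappa> * d1 + d2"
  have N0: "0 \<le> N" using kp cs by (simp add: N_def)
  define e1 where "e1 = min 1 (min (g / (2*M+1)) (\<mu> / (4*N+1)))"
  have e1p: "0 < e1" using g M0 mu0 N0 by (simp add: e1_def)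
  have e11: "e1 \<le> 1" by (simp add: e1_def)
  have e1M: "e1 * M \<le> g / 2"
  proof -
    have "e1 \<le> g / (2*M+1)" by (simp add: e1_def)
    hence "e1 * (2*M+1) \<le> g" using M0 by (simp add: pos_le_divide_eq)
    thus ?thesis using e1p by (simp add: algebra_simps)
  qed
  have e1N: "e1 * N \<le> \<mu> / 4"
  proof -
    have "e1 \<le> \<mu> / (4*N+1)" by (simp add: e1_def)
    hence "e1 * (4*N+1) \<le> \<mu>" using N0 by (simp add: pos_le_divide_eq)
    thus ?thesis using e1p by (simp add: algebra_simps)
  qed
  define e2 where "e2 = \<kappa> * e1"
  have e2p: "0 < e2" using kp e1p by (simp add: e2_def)
  define \<delta> where "\<delta> = min (e1*p/2) (min (g/2) (e2*k/4))"
  have dl: "\<delta> \<le> e1*p/2" "\<delta> \<le> g/2" "\<delta> \<le> e2*k/4" by (simp_all add: \<delta>_def)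
  have dp: "0 < \<delta>" using e1p pp g e2p k by (simp add: \<delta>_def)
  have der: "- (\<rho> + e1 * \<theta>2) * \<alpha>^2 - g * \<beta>^2
        + e2 * (- k * \<gamma>^2 + c1 * \<beta> * \<gamma> + c2 * \<alpha> * \<gamma> + c3 * \<alpha>^2)
        + e1 * (c4 * \<alpha> * \<beta> + c5 * \<beta>^2 + c7 * \<beta> * \<gamma>) \<le> - \<delta> * (\<alpha>^2 + \<beta>^2 + \<gamma>^2)" for \<alpha> \<beta> \<gamma>
  proof -
    have Y1: "(c2*\<alpha>)*\<gamma> \<le> (c2*\<alpha>)^2/k + k*\<gamma>^2/4" by (rule young[OF k])
    have Y2: "(c1*\<beta>)*\<gamma> \<le> (c1*\<beta>)^2/k + k*\<gamma>^2/4" by (rule young[OF k])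
    have Y3: "(c7/\<kappa>*\<beta>)*\<gamma> \<le> (c7/\<kappa>*\<beta>)^2/k + k*\<gamma>^2/4" by (rule young[OF k])
    have Y4: "(c4*\<beta>)*\<alpha> \<le> (c4*\<beta>)^2/p + p*\<alpha>^2/4" by (rule young[OF pp])
    have r: "\<rho> + e1 * \<theta>2 \<ge> e1 * p"
      using p e11 e1p mult_left_le_one_le[of \<rho> e1] by (simp add: p_def algebra_simps)
    have A0: "0 \<le> \<alpha>^2" "0 \<le> \<beta>^2" "0 \<le> \<gamma>^2" by auto
    have s1: "e2 * (c2 * \<alpha> * \<gamma>) \<le> e2 * (c2^2/k) * \<alpha>^2 + e2*k/4*\<gamma>^2"
      using mult_left_mono[OF Y1 less_imp_le[OF e2p]] by (simp add: algebra_simps power_mult_distrib)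
    have s2: "e2 * (c1 * \<beta> * \<gamma>) \<le> e2 * (c1^2/k) * \<beta>^2 + e2*k/4*\<gamma>^2"
      using mult_left_mono[OF Y2 less_imp_le[OF e2p]] by (simp add: algebra_simps power_mult_distrib)
    have s3: "e1 * (c7 * \<beta> * \<gamma>) \<le> e1 * (c7^2/(\<kappa>*k)) * \<beta>^2 + e2*k/4*\<gamma>^2"
    proof -
      have "e1 * (c7 * \<beta> * \<gamma>) = e2 * ((c7/\<kappa>*\<beta>)*\<gamma>)" using kp by (simp add: e2_def)
      also have "\<dots> \<le> e2 * ((c7/\<kappa>*\<beta>)^2/k + k*\<gamma>^2/4)" using mult_left_mono[OF Y3 less_imp_le[OF e2p]] .
      also have "\<dots> = e1 * (c7^2/(\<kappa>*k)) * \<beta>^2 + e2*k/4*\<gamma>^2"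
        using kp by (simp add: e2_def field_simps power2_eq_square)
      finally show ?thesis .
    qed
    have s4: "e1 * (c4 * \<alpha> * \<beta>) \<le> e1 * (c4^2/p) * \<beta>^2 + e1*p/4*\<alpha>^2"
      using mult_left_mono[OF Y4 less_imp_le[OF e1p]] by (simp add: algebra_simps power_mult_distrib)
    have s5: "- (\<rho> + e1 * \<theta>2) * \<alpha>^2 \<le> - (e1 * p) * \<alpha>^2" using r A0 by (intro mult_right_mono) auto
    have "- (\<rho> + e1 * \<theta>2) * \<alpha>^2 - g * \<beta>^2
        + e2 * (- k * \<gamma>^2 + c1 * \<beta> * \<gamma> + c2 * \<alpha> * \<gamma> + c3 * \<alpha>^2)
        + e1 * (c4 * \<alpha> * \<beta> + c5 * \<beta>^2 + c7 * \<beta> * \<gamma>)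
       = - (\<rho> + e1 * \<theta>2) * \<alpha>^2 - g * \<beta>^2 - e2*k*\<gamma>^2 + e2 * (c1 * \<beta> * \<gamma>) + e2 * (c2 * \<alpha> * \<gamma>)
        + e2*c3*\<alpha>^2 + e1 * (c4 * \<alpha> * \<beta>) + e1*c5*\<beta>^2 + e1 * (c7 * \<beta> * \<gamma>)"
      by (simp add: algebra_simps)
    also have "\<dots> \<le> (- (e1 * p) + e2 * (c2^2/k) + e2*c3 + e1*p/4) * \<alpha>^2
        + (- g + e2 * (c1^2/k) + e1*c5 + e1 * (c7^2/(\<kappa>*k)) + e1 * (c4^2/p)) * \<beta>^2
        + (- (e2*k/4)) * \<gamma>^2"
      using s1 s2 s3 s4 s5 by (simp add: algebra_simps)
    also have "\<dots> \<le> (- \<delta>) * \<alpha>^2 + (- \<delta>) * \<beta>^2 + (- \<delta>) * \<gamma>^2"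
    proof -
      have a: "- (e1 * p) + e2 * (c2^2/k) + e2*c3 + e1*p/4 \<le> - \<delta>"
      proof -
        have "e2 * (c2^2/k) + e2*c3 = e1 * (\<kappa> * (c3 + c2^2/k))" by (simp add: e2_def algebra_simps)
        also have "\<dots> \<le> e1 * (p/4)" using k1 e1p by (intro mult_left_mono) auto
        finally show ?thesis using dl by linarith
      qed
      have b: "- g + e2 * (c1^2/k) + e1*c5 + e1 * (c7^2/(\<kappa>*k)) + e1 * (c4^2/p) \<le> - \<delta>"
      proof -
        have "e2 * (c1^2/k) + e1*c5 + e1 * (c7^2/(\<kappa>*k)) + e1 * (c4^2/p) = e1 * M"
          by (simp add: e2_def M_def algebra_simps)
        thus ?thesis using e1M dl by linarith
      qed
      have c: "- (e2*k/4) \<le> - \<delta>" using dl by linarith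
      show ?thesis using mult_right_mono[OF a A0(1)] mult_right_mono[OF b A0(2)] mult_right_mono[OF c A0(3)]
        by linarith
    qed
    also have "\<dots> = - \<delta> * (\<alpha>^2 + \<beta>^2 + \<gamma>^2)" by (simp add: algebra_simps)
    finally show ?thesis .
  qed
  have Wb: "\<bar>e2 * d1 * \<alpha> * \<gamma>\<bar> + \<bar>e1 * d2 * \<alpha> * \<beta>\<bar> \<le> (lL * \<alpha>^2 + lC * \<beta>^2 + ki * \<gamma>^2) / 4" for \<alpha> \<beta> \<gamma>
  proof -
    have ag: "\<bar>\<alpha> * \<gamma>\<bar> \<le> (\<alpha>^2 + \<gamma>^2)/2"
      using sum_squares_bound[of "\<bar>\<alpha>\<bar>" "\<bar>\<gamma>\<bar>"] by (simp add: abs_mult power2_eq_square)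
    have ab: "\<bar>\<alpha> * \<beta>\<bar> \<le> (\<alpha>^2 + \<beta>^2)/2"
      using sum_squares_bound[of "\<bar>\<alpha>\<bar>" "\<bar>\<beta>\<bar>"] by (simp add: abs_mult power2_eq_square)
    have "\<bar>e2 * d1 * \<alpha> * \<gamma>\<bar> = (e2 * d1) * \<bar>\<alpha> * \<gamma>\<bar>" using e2p cs by (simp add: abs_mult)
    also have "\<dots> \<le> (e2 * d1) * ((\<alpha>^2 + \<gamma>^2)/2)" using ag e2p cs by (intro mult_left_mono) auto
    finally have 1: "\<bar>e2 * d1 * \<alpha> * \<gamma>\<bar> \<le> (e2 * d1) * ((\<alpha>^2 + \<gamma>^2)/2)" .
    have "\<bar>e1 * d2 * \<alpha> * \<beta>\<bar> = (e1 * d2) * \<bar>\<alpha> * \<beta>\<bar>" using e1p cs by (simp add: abs_mult)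
    also have "\<dots> \<le> (e1 * d2) * ((\<alpha>^2 + \<beta>^2)/2)" using ab e1p cs by (intro mult_left_mono) auto
    finally have 2: "\<bar>e1 * d2 * \<alpha> * \<beta>\<bar> \<le> (e1 * d2) * ((\<alpha>^2 + \<beta>^2)/2)" .
    have "e2 * d1 \<le> \<mu>/4" "e1 * d2 \<le> \<mu>/4"
    proof -
      have "e2 * d1 + e1 * d2 = e1 * N" by (simp add: e2_def N_def algebra_simps)
      moreover have "0 \<le> e2 * d1" "0 \<le> e1 * d2" using e1p e2p cs by auto
      ultimately show "e2 * d1 \<le> \<mu>/4" "e1 * d2 \<le> \<mu>/4" using e1N by linarith+
    qed
    hence x: "e2 * d1 \<le> lL/4" "e2 * d1 \<le> ki/4" "e1 * d2 \<le> lL/4" "e1 * d2 \<le> lC/4"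
      by (auto simp: \<mu>_def)
    have A0: "0 \<le> \<alpha>^2" "0 \<le> \<beta>^2" "0 \<le> \<gamma>^2" by auto
    have "(e2 * d1) * ((\<alpha>^2 + \<gamma>^2)/2) + (e1 * d2) * ((\<alpha>^2 + \<beta>^2)/2)
        = (e2*d1 + e1*d2)/2 * \<alpha>^2 + (e1*d2)/2 * \<beta>^2 + (e2*d1)/2 * \<gamma>^2" by (simp add: field_simps)
    also have "\<dots> \<le> (lL/4) * \<alpha>^2 + (lC/4) * \<beta>^2 + (ki/4) * \<gamma>^2"
    proof -
      have "e2*d1 + e1*d2 \<le> \<mu>/2" using \<open>e2 * d1 \<le> \<mu>/4\<close> \<open>e1 * d2 \<le> \<mu>/4\<close> by linarith
      hence "(e2*d1 + e1*d2)/2 \<le> lL/4" by (simp add: \<mu>_def)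
      moreover have "0 \<le> e1*d2" "0 \<le> e2*d1" using e1p e2p cs by auto
      hence "(e1*d2)/2 \<le> lC/4" "(e2*d1)/2 \<le> ki/4" using x by linarith+
      ultimately show ?thesis using mult_right_mono[OF _ A0(1)] mult_right_mono[OF _ A0(2)] mult_right_mono[OF _ A0(3)]
        by (meson add_mono)
    qed
    finally have "(e2 * d1) * ((\<alpha>^2 + \<gamma>^2)/2) + (e1 * d2) * ((\<alpha>^2 + \<beta>^2)/2)
       \<le> (lL/4) * \<alpha>^2 + (lC/4) * \<beta>^2 + (ki/4) * \<gamma>^2" .
    moreover have "(lL * \<alpha>^2 + lC * \<beta>^2 + ki * \<gamma>^2) / 4 = (lL/4) * \<alpha>^2 + (lC/4) * \<beta>^2 + (ki/4) * \<gamma>^2"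
      by (simp add: field_simps)
    ultimately show ?thesis using 1 2 by linarith
  qed
  show ?thesis using e1p e11 e2p dp der Wb by blast
qed


lemma part_a:
  fixes L R :: "real^'s^'s" and C G :: "real^'r^'r" and \<Gamma> :: "real^'r^'s"
    and B :: "real^'m^'s" and Ibar :: "real^'s" and ki kd :: real
  assumes L: "sym_pd L" and C: "sym_pd C" and R: "sym_psd R" and G: "sym_psd G"
    and kd: "kd > 0" and ki: "ki > 0"
  shows "\<exists>S :: real^'s \<Rightarrow> real^'r \<Rightarrow> real^'s \<Rightarrow> real^'r \<Rightarrow> real^'m \<Rightarrow> real.
        (\<forall>I V Ip Vp u. S I V Ip Vp u \<ge> 0) \<and>
        (\<forall>mu I V Ip Vp u t. cl_traj L C R G \<Gamma> B ki kd Ibar mu I V Ip Vp u \<and> t \<ge> 0 \<longrightarrow>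
           (\<exists>D. ((\<lambda>\<tau>. S (I \<tau>) (V \<tau>) (Ip \<tau>) (Vp \<tau>) (u \<tau>)) has_real_derivative D) (at t within {0..}) \<and>
                D \<le> mu t \<bullet> out_y B (Ip t)))"
proof -
  define S :: "real^'s \<Rightarrow> real^'r \<Rightarrow> real^'s \<Rightarrow> real^'r \<Rightarrow> real^'m \<Rightarrow> real" where
    "S = (\<lambda>I V Ip Vp u. 1/2 * (Ip \<bullet> (L *v Ip)) + 1/2 * (Vp \<bullet> (C *v Vp))
          + ki / 2 * ((transpose B *v (I - Ibar)) \<bullet> (transpose B *v (I - Ibar))))"
  have Lsym: "transpose L = L" and Csym: "transpose C = C" using L C by (auto simp: sym_pd_def)
  have Lpos: "x \<bullet> (L *v x) \<ge> 0" for x using L unfolding sym_pd_def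
    by (cases "x = 0") (auto intro: less_imp_le)
  have Cpos: "x \<bullet> (C *v x) \<ge> 0" for x using C unfolding sym_pd_def
    by (cases "x = 0") (auto intro: less_imp_le)
  have Rpos: "x \<bullet> (R *v x) \<ge> 0" for x using R unfolding sym_psd_def by auto
  have Gpos: "x \<bullet> (G *v x) \<ge> 0" for x using G unfolding sym_psd_def by auto
  have nonneg: "\<forall>I V Ip Vp u. S I V Ip Vp u \<ge> 0"
    using Lpos Cpos ki by (auto simp: S_def intro!: add_nonneg_nonneg mult_nonneg_nonneg)
  have deriv: "\<exists>D. ((\<lambda>\<tau>. S (I \<tau>) (V \<tau>) (Ip \<tau>) (Vp \<tau>) (u \<tau>)) has_real_derivative D) (at t within {0..}) \<and>
                D \<le> mu t \<bullet> out_y B (Ip t)"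
    if tr: "cl_traj L C R G \<Gamma> B ki kd Ibar mu I V Ip Vp u" and t: "t \<ge> 0" for mu I V Ip Vp u t
  proof -
    from tr t have dI: "(I has_vector_derivative Ip t) (at t within {0..})"
      and dV: "(V has_vector_derivative Vp t) (at t within {0..})"
      unfolding cl_traj_def by auto
    from tr t obtain Ipp where dIp: "(Ip has_vector_derivative Ipp) (at t within {0..})"
      and eI: "- (L *v Ipp) = \<Gamma> *v Vp t + R *v Ip t - B *v ctrl B ki kd Ibar (mu t) (I t) (Ip t)"
      unfolding cl_traj_def by blast
    from tr t obtain Vpp where dVp: "(Vp has_vector_derivative Vpp) (at t within {0..})"
      and eV: "C *v Vpp = transpose \<Gamma> *v Ip t - G *v Vp t"
      unfolding cl_traj_def by blast
    define z where "z = (\<lambda>\<tau>. transpose B *v (I \<tau> - Ibar))"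
    have dz: "(z has_vector_derivative transpose B *v Ip t) (at t within {0..})"
      unfolding z_def by (rule hvd_mat) (simp add: has_vector_derivative_diff_const dI)
    define D where "D = 1/2 * (Ip t \<bullet> (L *v Ipp) + Ipp \<bullet> (L *v Ip t))
       + 1/2 * (Vp t \<bullet> (C *v Vpp) + Vpp \<bullet> (C *v Vp t))
       + ki / 2 * (z t \<bullet> (transpose B *v Ip t) + (transpose B *v Ip t) \<bullet> z t)"
    have hd: "((\<lambda>\<tau>. S (I \<tau>) (V \<tau>) (Ip \<tau>) (Vp \<tau>) (u \<tau>)) has_real_derivative D) (at t within {0..})"
    proof -
      have e: "(\<lambda>\<tau>. S (I \<tau>) (V \<tau>) (Ip \<tau>) (Vp \<tau>) (u \<tau>)) =
        (\<lambda>\<tau>. 1/2 * (Ip \<tau> \<bullet> (L *v Ip \<tau>)) + 1/2 * (Vp \<tau> \<bullet> (C *v Vp \<tau>)) + ki / 2 * (z \<tau> \<bullet> z \<tau>))"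
        by (simp add: S_def z_def)
      have h1: "((\<lambda>\<tau>. Ip \<tau> \<bullet> (L *v Ip \<tau>)) has_real_derivative (Ip t \<bullet> (L *v Ipp) + Ipp \<bullet> (L *v Ip t))) (at t within {0..})"
        by (rule hvd_inner[OF dIp hvd_mat[OF dIp]]) simp
      have h2: "((\<lambda>\<tau>. Vp \<tau> \<bullet> (C *v Vp \<tau>)) has_real_derivative (Vp t \<bullet> (C *v Vpp) + Vpp \<bullet> (C *v Vp t))) (at t within {0..})"
        by (rule hvd_inner[OF dVp hvd_mat[OF dVp]]) simp
      have h3: "((\<lambda>\<tau>. z \<tau> \<bullet> z \<tau>) has_real_derivative (z t \<bullet> (transpose B *v Ip t) + (transpose B *v Ip t) \<bullet> z t)) (at t within {0..})"
        by (rule hvd_inner[OF dz dz]) simp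
      show ?thesis unfolding e D_def
        by (intro DERIV_add DERIV_cmult h1 h2 h3)
    qed
    have y: "out_y B (Ip t) = transpose B *v Ip t" by (simp add: out_y_def)
    have c1: "Ipp \<bullet> (L *v Ip t) = Ip t \<bullet> (L *v Ipp)" using inner_sym_mat[OF Lsym] by simp
    have c2: "Vpp \<bullet> (C *v Vp t) = Vp t \<bullet> (C *v Vpp)" using inner_sym_mat[OF Csym] by simp
    have "Ip t \<bullet> (L *v Ipp) = - (Ip t \<bullet> (\<Gamma> *v Vp t)) - Ip t \<bullet> (R *v Ip t)
          + (transpose B *v Ip t) \<bullet> ctrl B ki kd Ibar (mu t) (I t) (Ip t)"
    proof -
      have "Ip t \<bullet> (L *v Ipp) = - (Ip t \<bullet> (- (L *v Ipp)))" by simp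
      also have "\<dots> = - (Ip t \<bullet> (\<Gamma> *v Vp t)) - Ip t \<bullet> (R *v Ip t)
          + Ip t \<bullet> (B *v ctrl B ki kd Ibar (mu t) (I t) (Ip t))"
        unfolding eI by (simp add: inner_add_right inner_diff_right)
      finally show ?thesis by (simp add: inner_mat)
    qed
    moreover have "Vp t \<bullet> (C *v Vpp) = (transpose \<Gamma> *v Ip t) \<bullet> Vp t - Vp t \<bullet> (G *v Vp t)"
      unfolding eV by (simp add: inner_diff_right inner_commute)
    moreover have "Ip t \<bullet> (\<Gamma> *v Vp t) = (transpose \<Gamma> *v Ip t) \<bullet> Vp t" by (simp add: inner_mat)
    moreover have "(transpose B *v Ip t) \<bullet> ctrl B ki kd Ibar (mu t) (I t) (Ip t)
        = (transpose B *v Ip t) \<bullet> mu t - ki * ((transpose B *v Ip t) \<bullet> z t)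
          - kd * ((transpose B *v Ip t) \<bullet> (transpose B *v Ip t))"
      by (simp add: ctrl_def z_def inner_diff_right)
    ultimately have "D = - (Ip t \<bullet> (R *v Ip t)) - Vp t \<bullet> (G *v Vp t)
          - kd * ((transpose B *v Ip t) \<bullet> (transpose B *v Ip t)) + mu t \<bullet> out_y B (Ip t)"
      unfolding D_def c1 c2 y by (simp add: inner_commute algebra_simps)
    also have "\<dots> \<le> mu t \<bullet> out_y B (Ip t)"
    proof -
      have "0 \<le> kd * ((transpose B *v Ip t) \<bullet> (transpose B *v Ip t))"
        using kd by (intro mult_nonneg_nonneg) auto
      thus ?thesis using Rpos[of "Ip t"] Gpos[of "Vp t"] by linarith
    qed
    finally show ?thesis using hd by blast
  qed
  show ?thesis using nonneg deriv by (intro exI[of _ S]) blast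
qed


lemma ip_bound:
  fixes x :: "real^'a" and y :: "real^'b" and P Q :: "real^'c"
  assumes "norm P \<le> K * norm x" "norm Q \<le> K' * norm y" "0 \<le> K"
  shows "\<bar>P \<bullet> Q\<bar> \<le> K * K' * (norm x * norm y)"
proof -
  have "\<bar>P \<bullet> Q\<bar> \<le> norm P * norm Q" by (rule Cauchy_Schwarz_ineq2)
  also have "\<dots> \<le> (K * norm x) * (K' * norm y)"
    using assms by (intro mult_mono) auto
  finally show ?thesis by (simp add: algebra_simps)
qed

lemma mat_neg: "(A::real^'n^'m) *v (- x) = - (A *v x)"
  by (metis diff_0 matrix_vector_mult_0_right matrix_vector_mult_diff_distrib)

lemma vec_bounds:
  fixes L R :: "real^'s^'s" and C G :: "real^'r^'r" and \<Gamma> :: "real^'r^'s"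
    and B :: "real^'m^'s" and ki kd :: real
  assumes L: "sym_pd L" and C: "sym_pd C" and R: "sym_psd R" and G: "sym_psd G"
    and B: "full_col_rank B"
    and kd: "kd > 0" and ki: "ki > 0"
    and hyp: "(sym_pd R \<and> sym_pd G) \<or> (sym_pd G \<and> full_col_rank (transpose \<Gamma>))"
  shows "\<exists>e1 e2 \<delta> m KW. 0 < \<delta> \<and> 0 < m \<and> 0 < KW \<and>
    (\<forall>(a::real^'s) (v::real^'r) (z::real^'m) a' v'.
       - (L *v a') = \<Gamma> *v v + R *v a - B *v (- (ki *\<^sub>R z) - kd *\<^sub>R (transpose B *v a)) \<longrightarrow>
       C *v v' = transpose \<Gamma> *v a - G *v v \<longrightarrow>
       1/2 * (a \<bullet> (L *v a') + a' \<bullet> (L *v a)) + 1/2 * (v \<bullet> (C *v v') + v' \<bullet> (C *v v))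
       + ki/2 * (z \<bullet> (transpose B *v a) + (transpose B *v a) \<bullet> z)
       + e2 * ((L *v a) \<bullet> (B *v (transpose B *v a)) + (L *v a') \<bullet> (B *v z))
       - e1 * ((C *v v) \<bullet> (transpose \<Gamma> *v a') + (C *v v') \<bullet> (transpose \<Gamma> *v a))
       \<le> - \<delta> * ((norm a)^2 + (norm v)^2 + (norm z)^2)) \<and>
    (\<forall>(a::real^'s) (v::real^'r) (z::real^'m).
       m * ((norm a)^2 + (norm v)^2 + (norm z)^2) \<le>
         1/2 * (a \<bullet> (L *v a)) + 1/2 * (v \<bullet> (C *v v)) + ki/2 * (z \<bullet> z)
         + e2 * ((L *v a) \<bullet> (B *v z)) - e1 * ((C *v v) \<bullet> (transpose \<Gamma> *v a)) \<and>
       1/2 * (a \<bullet> (L *v a)) + 1/2 * (v \<bullet> (C *v v)) + ki/2 * (z \<bullet> z)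
         + e2 * ((L *v a) \<bullet> (B *v z)) - e1 * ((C *v v) \<bullet> (transpose \<Gamma> *v a))
       \<le> KW * ((norm a)^2 + (norm v)^2 + (norm z)^2))"
proof -
  have Lsym: "transpose L = L" and Csym: "transpose C = C" using L C by (auto simp: sym_pd_def)
  obtain lL where lL: "lL > 0" "\<And>x. lL * (norm x)^2 \<le> x \<bullet> (L *v x)"
    using pos_form_bound[of L] L unfolding sym_pd_def by blast
  obtain lC where lC: "lC > 0" "\<And>x. lC * (norm x)^2 \<le> x \<bullet> (C *v x)"
    using pos_form_bound[of C] C unfolding sym_pd_def by blast
  obtain g where g: "g > 0" "\<And>x. g * (norm x)^2 \<le> x \<bullet> (G *v x)"
    using pos_form_bound[of G] hyp unfolding sym_pd_def by blast
  obtain \<rho> \<theta> where rt: "0 \<le> \<rho>" "0 \<le> \<theta>" "0 < \<rho> + \<theta>^2"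
    "\<And>x. \<rho> * (norm x)^2 \<le> x \<bullet> (R *v x)" "\<And>x. \<theta> * norm x \<le> norm (transpose \<Gamma> *v x)"
  proof (cases "sym_pd R")
    case True
    obtain r where "r > 0" "\<And>x. r * (norm x)^2 \<le> x \<bullet> (R *v x)"
      using pos_form_bound[of R] True unfolding sym_pd_def by blast
    thus ?thesis using that[of r 0] by auto
  next
    case False
    hence "full_col_rank (transpose \<Gamma>)" using hyp by auto
    hence "inj ((*v) (transpose \<Gamma>))" by (simp add: full_col_rank_def full_rank_injective)
    then obtain th where "th > 0" "\<And>x. th * norm x \<le> norm (transpose \<Gamma> *v x)"
      using inj_bound by blast
    moreover have "\<And>x. 0 * (norm x)^2 \<le> x \<bullet> (R *v x)" using R by (simp add: sym_psd_def)
    ultimately show ?thesis using that[of 0 th] by auto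
  qed
  have "inj ((*v) B)" using B by (simp add: full_col_rank_def full_rank_injective)
  then obtain b where b: "b > 0" "\<And>x. b * norm x \<le> norm (B *v x)" using inj_bound by blast
  obtain KL where KL: "KL > 0" "\<And>x. norm (L *v x) \<le> KL * norm x" using mat_bound by blast
  obtain KC where KC: "KC > 0" "\<And>x. norm (C *v x) \<le> KC * norm x" using mat_bound by blast
  obtain KR where KR: "KR > 0" "\<And>x. norm (R *v x) \<le> KR * norm x" using mat_bound by blast
  obtain KG where KG: "KG > 0" "\<And>x. norm (G *v x) \<le> KG * norm x" using mat_bound by blast
  obtain KGa where KGa: "KGa > 0" "\<And>x. norm (\<Gamma> *v x) \<le> KGa * norm x" using mat_bound by blast

  obtain KGt where KGt: "KGt > 0" "\<And>x. norm (transpose \<Gamma> *v x) \<le> KGt * norm x" using mat_bound by blast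
  obtain KB where KB: "KB > 0" "\<And>x. norm (B *v x) \<le> KB * norm x" using mat_bound by blast
  obtain KBt where KBt: "KBt > 0" "\<And>x. norm (transpose B *v x) \<le> KBt * norm x" using mat_bound by blast
  have KBB: "norm (B *v (transpose B *v x)) \<le> (KB * KBt) * norm x" for x
  proof -
    have "norm (B *v (transpose B *v x)) \<le> KB * norm (transpose B *v x)" by (rule KB(2))
    also have "\<dots> \<le> KB * (KBt * norm x)" using KB(1) KBt(2) by (intro mult_left_mono) auto
    finally show ?thesis by simp
  qed
  define k where "k = ki * b^2"
  define c1 where "c1 = KGa * KB"
  define c2 where "c2 = KR * KB + kd * ((KB * KBt) * KB)"
  define c3 where "c3 = KL * (KB * KBt)"
  define c4 where "c4 = KG * KGt + KC * KGt * (KR + KB * (kd * KBt)) / lL"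
  define c5 where "c5 = KC * KGt * KGa / lL"
  define c7 where "c7 = KC * KGt * (KB * ki) / lL"
  define d1 where "d1 = KL * KB"
  define d2 where "d2 = KC * KGt"
  have pos: "0 < k" "0 \<le> c1" "0 \<le> c2" "0 \<le> c3" "0 \<le> c4" "0 \<le> c5" "0 \<le> c7" "0 \<le> d1" "0 \<le> d2"
    using ki b KGa KB KBt KR KL KG KGt KC lL kd
    by (auto simp: k_def c1_def c2_def c3_def c4_def c5_def c7_def d1_def d2_def)
  obtain e1 e2 \<delta> where ee: "0 < e1" "e1 \<le> 1" "0 < e2" "0 < \<delta>"
    and der: "\<And>\<alpha> \<beta> \<gamma>. - (\<rho> + e1 * \<theta>^2) * \<alpha>^2 - g * \<beta>^2
        + e2 * (- k * \<gamma>^2 + c1 * \<beta> * \<gamma> + c2 * \<alpha> * \<gamma> + c3 * \<alpha>^2)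
        + e1 * (c4 * \<alpha> * \<beta> + c5 * \<beta>^2 + c7 * \<beta> * \<gamma>) \<le> - \<delta> * (\<alpha>^2 + \<beta>^2 + \<gamma>^2)"
    and Wb: "\<And>\<alpha> \<beta> \<gamma>. \<bar>e2 * d1 * \<alpha> * \<gamma>\<bar> + \<bar>e1 * d2 * \<alpha> * \<beta>\<bar> \<le> (lL * \<alpha>^2 + lC * \<beta>^2 + ki * \<gamma>^2) / 4"
    using eps_choice[of \<rho> "\<theta>^2" g k c1 c2 c3 c4 c5 c7 d1 d2 lL lC ki] rt pos g lL lC ki by auto
  have Dbound: "1/2 * (a \<bullet> (L *v a') + a' \<bullet> (L *v a)) + 1/2 * (v \<bullet> (C *v v') + v' \<bullet> (C *v v))
       + ki/2 * (z \<bullet> (transpose B *v a) + (transpose B *v a) \<bullet> z)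
       + e2 * ((L *v a) \<bullet> (B *v (transpose B *v a)) + (L *v a') \<bullet> (B *v z))
       - e1 * ((C *v v) \<bullet> (transpose \<Gamma> *v a') + (C *v v') \<bullet> (transpose \<Gamma> *v a))
       \<le> - \<delta> * ((norm a)^2 + (norm v)^2 + (norm z)^2)"
    if hA: "- (L *v a') = \<Gamma> *v v + R *v a - B *v (- (ki *\<^sub>R z) - kd *\<^sub>R (transpose B *v a))"
    and hV: "C *v v' = transpose \<Gamma> *v a - G *v v"
    for a :: "real^'s" and v :: "real^'r" and z :: "real^'m" and a' v'
  proof -
    define c where "c = - (ki *\<^sub>R z) - kd *\<^sub>R (transpose B *v a)"
    have Bc: "B *v c = - (ki *\<^sub>R (B *v z)) - kd *\<^sub>R (B *v (transpose B *v a))"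
      by (simp add: c_def matrix_vector_mult_diff_distrib matrix_vector_mult_scaleR mat_neg)
    have hA': "L *v a' = - (\<Gamma> *v v) - R *v a + B *v c"
      using arg_cong[OF hA[folded c_def], of uminus] by simp
    define \<alpha> where "\<alpha> = norm a"
    define \<beta> where "\<beta> = norm v"
    define \<gamma> where "\<gamma> = norm z"
    have abg: "0 \<le> \<alpha>" "0 \<le> \<beta>" "0 \<le> \<gamma>" by (auto simp: \<alpha>_def \<beta>_def \<gamma>_def)
    \<comment> \<open>energy part\<close>
    have D0: "1/2 * (a \<bullet> (L *v a') + a' \<bullet> (L *v a)) + 1/2 * (v \<bullet> (C *v v') + v' \<bullet> (C *v v))
       + ki/2 * (z \<bullet> (transpose B *v a) + (transpose B *v a) \<bullet> z)
       = - (a \<bullet> (R *v a)) - v \<bullet> (G *v v) - kd * ((transpose B *v a) \<bullet> (transpose B *v a))"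
    proof -
      have c1': "a' \<bullet> (L *v a) = a \<bullet> (L *v a')" using inner_sym_mat[OF Lsym] by simp
      have c2': "v' \<bullet> (C *v v) = v \<bullet> (C *v v')" using inner_sym_mat[OF Csym] by simp
      have "a \<bullet> (L *v a') = - ((transpose \<Gamma> *v a) \<bullet> v) - a \<bullet> (R *v a) + (transpose B *v a) \<bullet> c"
        unfolding hA' by (simp add: inner_add_right inner_diff_right inner_mat)
      moreover have "v \<bullet> (C *v v') = (transpose \<Gamma> *v a) \<bullet> v - v \<bullet> (G *v v)"
        unfolding hV by (simp add: inner_diff_right inner_commute)
      moreover have "(transpose B *v a) \<bullet> c = - ki * ((transpose B *v a) \<bullet> z)
          - kd * ((transpose B *v a) \<bullet> (transpose B *v a))"
        by (simp add: c_def inner_diff_right)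
      ultimately show ?thesis unfolding c1' c2' by (simp add: inner_commute algebra_simps)
    qed
    have D0b: "- (a \<bullet> (R *v a)) - v \<bullet> (G *v v) - kd * ((transpose B *v a) \<bullet> (transpose B *v a))
       \<le> - \<rho> * \<alpha>^2 - g * \<beta>^2"
    proof -
      have "0 \<le> kd * ((transpose B *v a) \<bullet> (transpose B *v a))"
        using kd by (intro mult_nonneg_nonneg) auto
      thus ?thesis using rt(4)[of a] g(2)[of v] by (simp add: \<alpha>_def \<beta>_def)
    qed
    \<comment> \<open>cross term 1\<close>
    have D1: "(L *v a) \<bullet> (B *v (transpose B *v a)) + (L *v a') \<bullet> (B *v z)
       \<le> - k * \<gamma>^2 + c1 * \<beta> * \<gamma> + c2 * \<alpha> * \<gamma> + c3 * \<alpha>^2"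
    proof -
      have e: "(L *v a') \<bullet> (B *v z) = - ((\<Gamma> *v v) \<bullet> (B *v z)) - (R *v a) \<bullet> (B *v z)
          - ki * ((B *v z) \<bullet> (B *v z)) - kd * ((B *v (transpose B *v a)) \<bullet> (B *v z))"
        unfolding hA' Bc by (simp add: inner_add_left inner_diff_left)
      have t1: "\<bar>(\<Gamma> *v v) \<bullet> (B *v z)\<bar> \<le> c1 * \<beta> * \<gamma>"
        using ip_bound[OF KGa(2) KB(2)] KGa(1) by (simp add: c1_def \<beta>_def \<gamma>_def mult.assoc)
      have t2: "\<bar>(R *v a) \<bullet> (B *v z)\<bar> \<le> KR * KB * (\<alpha> * \<gamma>)"
        using ip_bound[OF KR(2) KB(2)] KR(1) by (simp add: \<alpha>_def \<gamma>_def)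
      have t3: "\<bar>(B *v (transpose B *v a)) \<bullet> (B *v z)\<bar> \<le> (KB * KBt) * KB * (\<alpha> * \<gamma>)"
        using ip_bound[OF KBB KB(2)] KB(1) KBt(1) by (simp add: \<alpha>_def \<gamma>_def)
      have t4: "\<bar>(L *v a) \<bullet> (B *v (transpose B *v a))\<bar> \<le> KL * (KB * KBt) * (\<alpha> * \<alpha>)"
        using ip_bound[OF KL(2) KBB] KL(1) by (simp add: \<alpha>_def)
      have t5: "k * \<gamma>^2 \<le> ki * ((B *v z) \<bullet> (B *v z))"
      proof -
        have "b * \<gamma> \<le> norm (B *v z)" using b(2) by (simp add: \<gamma>_def)
        hence "(b * \<gamma>)^2 \<le> (norm (B *v z))^2" using b(1) abg by (intro power_mono) auto
        hence "b^2 * \<gamma>^2 \<le> (B *v z) \<bullet> (B *v z)" by (simp add: power2_norm_eq_inner power_mult_distrib)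
        thus ?thesis using ki by (simp add: k_def mult.assoc)
      qed
      have t3': "kd * \<bar>(B *v (transpose B *v a)) \<bullet> (B *v z)\<bar> \<le> kd * ((KB * KBt) * KB * (\<alpha> * \<gamma>))"
        using t3 kd by (intro mult_left_mono) auto
      have "- ((\<Gamma> *v v) \<bullet> (B *v z)) - (R *v a) \<bullet> (B *v z) - kd * ((B *v (transpose B *v a)) \<bullet> (B *v z))
            + (L *v a) \<bullet> (B *v (transpose B *v a))
          \<le> c1 * \<beta> * \<gamma> + KR * KB * (\<alpha> * \<gamma>) + kd * ((KB * KBt) * KB * (\<alpha> * \<gamma>)) + KL * (KB * KBt) * (\<alpha> * \<alpha>)"
      proof -
        have "kd * (- ((B *v (transpose B *v a)) \<bullet> (B *v z))) \<le> kd * \<bar>(B *v (transpose B *v a)) \<bullet> (B *v z)\<bar>"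
          using kd by (intro mult_left_mono) auto
        thus ?thesis using t1 t2 t3' t4 abs_ge_minus_self[of "(\<Gamma> *v v) \<bullet> (B *v z)"]
          abs_ge_minus_self[of "(R *v a) \<bullet> (B *v z)"] abs_ge_self[of "(L *v a) \<bullet> (B *v (transpose B *v a))"]
          by linarith
      qed
      also have "\<dots> = c1 * \<beta> * \<gamma> + c2 * \<alpha> * \<gamma> + c3 * \<alpha>^2"
        by (simp add: c2_def c3_def algebra_simps power2_eq_square)
      finally show ?thesis unfolding e using t5 by linarith
    qed
    \<comment> \<open>cross term 2\<close>
    have D2: "- ((C *v v) \<bullet> (transpose \<Gamma> *v a') + (C *v v') \<bullet> (transpose \<Gamma> *v a))
       \<le> - (\<theta>^2) * \<alpha>^2 + c4 * \<alpha> * \<beta> + c5 * \<beta>^2 + c7 * \<beta> * \<gamma>"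
    proof -
      have e: "(C *v v') \<bullet> (transpose \<Gamma> *v a) = (transpose \<Gamma> *v a) \<bullet> (transpose \<Gamma> *v a)
          - (G *v v) \<bullet> (transpose \<Gamma> *v a)"
        unfolding hV by (simp add: inner_diff_left)
      have u1: "\<theta>^2 * \<alpha>^2 \<le> (transpose \<Gamma> *v a) \<bullet> (transpose \<Gamma> *v a)"
      proof -
        have "(\<theta> * \<alpha>)^2 \<le> (norm (transpose \<Gamma> *v a))^2"
          using rt(2,5) abg by (intro power_mono) (auto simp: \<alpha>_def)
        thus ?thesis by (simp add: power2_norm_eq_inner power_mult_distrib)
      qed
      have u2: "\<bar>(G *v v) \<bullet> (transpose \<Gamma> *v a)\<bar> \<le> KG * KGt * (\<beta> * \<alpha>)"
        using ip_bound[OF KG(2) KGt(2)] KG(1) by (simp add: \<alpha>_def \<beta>_def)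
      define A' where "A' = norm a'"
      have u3: "\<bar>(C *v v) \<bullet> (transpose \<Gamma> *v a')\<bar> \<le> KC * KGt * (\<beta> * A')"
        using ip_bound[OF KC(2) KGt(2)] KC(1) by (simp add: A'_def \<beta>_def)
      have nc: "norm c \<le> ki * \<gamma> + kd * (KBt * \<alpha>)"
      proof -
        have "norm c \<le> norm (ki *\<^sub>R z) + norm (kd *\<^sub>R (transpose B *v a))"
          unfolding c_def by (metis norm_minus_cancel norm_triangle_ineq4)
        also have "\<dots> = ki * \<gamma> + kd * norm (transpose B *v a)" using ki kd by (simp add: \<gamma>_def)
        also have "\<dots> \<le> ki * \<gamma> + kd * (KBt * \<alpha>)" using kd KBt(2)[of a] by (simp add: \<alpha>_def)
        finally show ?thesis .
      qed
      have nLa: "norm (L *v a') \<le> KGa * \<beta> + KR * \<alpha> + KB * (ki * \<gamma> + kd * (KBt * \<alpha>))"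
      proof -
        have "norm (L *v a') \<le> norm (\<Gamma> *v v) + norm (R *v a) + norm (B *v c)"
        proof -
          have "norm (L *v a') \<le> norm (- (\<Gamma> *v v) - R *v a) + norm (B *v c)"
            unfolding hA' by (rule norm_triangle_ineq)
          also have "norm (- (\<Gamma> *v v) - R *v a) \<le> norm (- (\<Gamma> *v v)) + norm (R *v a)"
            by (rule norm_triangle_ineq4)
          finally show ?thesis by simp
        qed
        also have "\<dots> \<le> KGa * \<beta> + KR * \<alpha> + KB * norm c"
          using KGa(2)[of v] KR(2)[of a] KB(2)[of c] by (simp add: \<alpha>_def \<beta>_def)
        also have "\<dots> \<le> KGa * \<beta> + KR * \<alpha> + KB * (ki * \<gamma> + kd * (KBt * \<alpha>))"
          using nc KB(1) by simp
        finally show ?thesis .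
      qed
      have nA: "lL * A' \<le> KGa * \<beta> + KR * \<alpha> + KB * (ki * \<gamma> + kd * (KBt * \<alpha>))"
      proof (cases "A' = 0")
        case True thus ?thesis using nLa norm_ge_zero[of "L *v a'"] by (simp del: norm_ge_zero)
      next
        case False
        hence Ap: "0 < A'" by (simp add: A'_def)
        have "lL * A'^2 \<le> a' \<bullet> (L *v a')" using lL(2) by (simp add: A'_def)
        also have "\<dots> \<le> A' * norm (L *v a')" unfolding A'_def by (rule Cauchy_Schwarz_ineq2[THEN abs_le_D1])
        finally have "lL * A' * A' \<le> norm (L *v a') * A'" by (simp add: power2_eq_square algebra_simps)
        hence "lL * A' \<le> norm (L *v a')" using Ap by simp
        thus ?thesis using nLa by linarith
      qed
      have u4: "KC * KGt * (\<beta> * A') \<le> c4' * \<alpha> * \<beta> + c5 * \<beta>^2 + c7 * \<beta> * \<gamma>"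
        if "c4' = KC * KGt * (KR + KB * (kd * KBt)) / lL" for c4'
      proof -
        have "A' \<le> (KGa * \<beta> + KR * \<alpha> + KB * (ki * \<gamma> + kd * (KBt * \<alpha>))) / lL"
          using nA lL(1) by (simp add: pos_le_divide_eq mult.commute)
        hence "KC * KGt * (\<beta> * A') \<le> KC * KGt * (\<beta> * ((KGa * \<beta> + KR * \<alpha> + KB * (ki * \<gamma> + kd * (KBt * \<alpha>))) / lL))"
          using KC(1) KGt(1) abg by (intro mult_left_mono) auto
        also have "\<dots> = c4' * \<alpha> * \<beta> + c5 * \<beta>^2 + c7 * \<beta> * \<gamma>"
          using lL(1) by (simp add: that c5_def c7_def field_simps power2_eq_square)
        finally show ?thesis .
      qed
      have "c4 = KG * KGt + KC * KGt * (KR + KB * (kd * KBt)) / lL" by (simp add: c4_def)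
      have "c4 * \<alpha> * \<beta> = KG * KGt * (\<beta> * \<alpha>) + (KC * KGt * (KR + KB * (kd * KBt)) / lL) * \<alpha> * \<beta>"
        by (simp add: c4_def algebra_simps)
      thus ?thesis unfolding e using u1 u2 u3 u4[OF refl]
          abs_ge_minus_self[of "(C *v v) \<bullet> (transpose \<Gamma> *v a')"] abs_ge_self[of "(G *v v) \<bullet> (transpose \<Gamma> *v a)"]
        by linarith
    qed
    have "1/2 * (a \<bullet> (L *v a') + a' \<bullet> (L *v a)) + 1/2 * (v \<bullet> (C *v v') + v' \<bullet> (C *v v))
       + ki/2 * (z \<bullet> (transpose B *v a) + (transpose B *v a) \<bullet> z)
       + e2 * ((L *v a) \<bullet> (B *v (transpose B *v a)) + (L *v a') \<bullet> (B *v z))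
       - e1 * ((C *v v) \<bullet> (transpose \<Gamma> *v a') + (C *v v') \<bullet> (transpose \<Gamma> *v a))
       \<le> - \<rho> * \<alpha>^2 - g * \<beta>^2 + e2 * (- k * \<gamma>^2 + c1 * \<beta> * \<gamma> + c2 * \<alpha> * \<gamma> + c3 * \<alpha>^2)
         + e1 * (- (\<theta>^2) * \<alpha>^2 + c4 * \<alpha> * \<beta> + c5 * \<beta>^2 + c7 * \<beta> * \<gamma>)"
      using D0 D0b mult_left_mono[OF D1 less_imp_le[OF ee(3)]] mult_left_mono[OF D2 less_imp_le[OF ee(1)]]
      by (simp add: algebra_simps)
    also have "\<dots> = - (\<rho> + e1 * \<theta>^2) * \<alpha>^2 - g * \<beta>^2
        + e2 * (- k * \<gamma>^2 + c1 * \<beta> * \<gamma> + c2 * \<alpha> * \<gamma> + c3 * \<alpha>^2)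
        + e1 * (c4 * \<alpha> * \<beta> + c5 * \<beta>^2 + c7 * \<beta> * \<gamma>)" by (simp add: algebra_simps)
    also have "\<dots> \<le> - \<delta> * (\<alpha>^2 + \<beta>^2 + \<gamma>^2)" by (rule der)
    finally show ?thesis by (simp add: \<alpha>_def \<beta>_def \<gamma>_def)
  qed
  define m where "m = min lL (min lC ki) / 4"
  define KW where "KW = KL + KC + ki + lL + lC"
  have m0: "0 < m" using lL lC ki by (simp add: m_def)
  have KW0: "0 < KW" using KL KC ki lL lC by (simp add: KW_def)
  have Wbound: "m * ((norm a)^2 + (norm v)^2 + (norm z)^2) \<le>
         1/2 * (a \<bullet> (L *v a)) + 1/2 * (v \<bullet> (C *v v)) + ki/2 * (z \<bullet> z)
         + e2 * ((L *v a) \<bullet> (B *v z)) - e1 * ((C *v v) \<bullet> (transpose \<Gamma> *v a)) \<and>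
       1/2 * (a \<bullet> (L *v a)) + 1/2 * (v \<bullet> (C *v v)) + ki/2 * (z \<bullet> z)
         + e2 * ((L *v a) \<bullet> (B *v z)) - e1 * ((C *v v) \<bullet> (transpose \<Gamma> *v a))
       \<le> KW * ((norm a)^2 + (norm v)^2 + (norm z)^2)"
    for a :: "real^'s" and v :: "real^'r" and z :: "real^'m"
  proof -
    define \<alpha> where "\<alpha> = norm a"
    define \<beta> where "\<beta> = norm v"
    define \<gamma> where "\<gamma> = norm z"
    have abg: "0 \<le> \<alpha>" "0 \<le> \<beta>" "0 \<le> \<gamma>" by (auto simp: \<alpha>_def \<beta>_def \<gamma>_def)
    have w1: "\<bar>e2 * ((L *v a) \<bullet> (B *v z))\<bar> \<le> \<bar>e2 * d1 * \<alpha> * \<gamma>\<bar>"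
    proof -
      have "\<bar>(L *v a) \<bullet> (B *v z)\<bar> \<le> d1 * (\<alpha> * \<gamma>)"
        using ip_bound[OF KL(2) KB(2)] KL(1) by (simp add: d1_def \<alpha>_def \<gamma>_def)
      hence "e2 * \<bar>(L *v a) \<bullet> (B *v z)\<bar> \<le> e2 * (d1 * (\<alpha> * \<gamma>))" using ee(3) by (intro mult_left_mono) auto
      thus ?thesis using ee(3) pos abg by (simp add: abs_mult mult.assoc)
    qed
    have w2: "\<bar>e1 * ((C *v v) \<bullet> (transpose \<Gamma> *v a))\<bar> \<le> \<bar>e1 * d2 * \<alpha> * \<beta>\<bar>"
    proof -
      have "\<bar>(C *v v) \<bullet> (transpose \<Gamma> *v a)\<bar> \<le> d2 * (\<beta> * \<alpha>)"
        using ip_bound[OF KC(2) KGt(2)] KC(1) by (simp add: d2_def \<alpha>_def \<beta>_def)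
      hence "e1 * \<bar>(C *v v) \<bullet> (transpose \<Gamma> *v a)\<bar> \<le> e1 * (d2 * (\<beta> * \<alpha>))" using ee(1) by (intro mult_left_mono) auto
      thus ?thesis using ee(1) pos abg by (simp add: abs_mult algebra_simps)
    qed
    have w3: "\<bar>e2 * d1 * \<alpha> * \<gamma>\<bar> + \<bar>e1 * d2 * \<alpha> * \<beta>\<bar> \<le> (lL * \<alpha>^2 + lC * \<beta>^2 + ki * \<gamma>^2) / 4" by (rule Wb)
    have q1: "lL * \<alpha>^2 \<le> a \<bullet> (L *v a)" using lL(2) by (simp add: \<alpha>_def)
    have q2: "lC * \<beta>^2 \<le> v \<bullet> (C *v v)" using lC(2) by (simp add: \<beta>_def)
    have q3: "z \<bullet> z = \<gamma>^2" by (simp add: \<gamma>_def power2_norm_eq_inner)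
    have q4: "a \<bullet> (L *v a) \<le> KL * \<alpha>^2"
      using ip_bound[of a 1 a "L *v a" KL a] KL by (simp add: \<alpha>_def power2_eq_square abs_le_iff)
    have q5: "v \<bullet> (C *v v) \<le> KC * \<beta>^2"
      using ip_bound[of v 1 v "C *v v" KC v] KC by (simp add: \<beta>_def power2_eq_square abs_le_iff)
    have mm: "m * (\<alpha>^2 + \<beta>^2 + \<gamma>^2) \<le> (lL * \<alpha>^2 + lC * \<beta>^2 + ki * \<gamma>^2) / 4"
    proof -
      have "m \<le> lL/4" "m \<le> lC/4" "m \<le> ki/4" by (auto simp: m_def)
      hence "m * \<alpha>^2 \<le> lL/4 * \<alpha>^2" "m * \<beta>^2 \<le> lC/4 * \<beta>^2" "m * \<gamma>^2 \<le> ki/4 * \<gamma>^2"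
        using zero_le_power2 by (metis mult_right_mono)+
      moreover have "m * (\<alpha>^2 + \<beta>^2 + \<gamma>^2) = m * \<alpha>^2 + m * \<beta>^2 + m * \<gamma>^2" by (simp add: algebra_simps)
      moreover have "(lL * \<alpha>^2 + lC * \<beta>^2 + ki * \<gamma>^2) / 4 = lL/4 * \<alpha>^2 + lC/4 * \<beta>^2 + ki/4 * \<gamma>^2" by simp
      ultimately show ?thesis by linarith
    qed
    have kk: "(lL * \<alpha>^2 + lC * \<beta>^2 + ki * \<gamma>^2) / 4 + KL/2 * \<alpha>^2 + KC/2 * \<beta>^2 + ki/2 * \<gamma>^2
       \<le> KW * (\<alpha>^2 + \<beta>^2 + \<gamma>^2)"
    proof -
      have "(lL * \<alpha>^2 + lC * \<beta>^2 + ki * \<gamma>^2) / 4 + KL/2 * \<alpha>^2 + KC/2 * \<beta>^2 + ki/2 * \<gamma>^2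
         = (lL/4 + KL/2) * \<alpha>^2 + (lC/4 + KC/2) * \<beta>^2 + (3*ki/4) * \<gamma>^2" by (simp add: field_simps)
      also have "\<dots> \<le> KW * \<alpha>^2 + KW * \<beta>^2 + KW * \<gamma>^2"
        using KL KC ki lL lC by (intro add_mono mult_right_mono) (auto simp: KW_def)
      finally show ?thesis by (simp add: algebra_simps)
    qed
    have h1: "1/2 * (a \<bullet> (L *v a)) \<ge> 1/2 * (lL * \<alpha>^2)" "1/2 * (v \<bullet> (C *v v)) \<ge> 1/2 * (lC * \<beta>^2)"
      "1/2 * (a \<bullet> (L *v a)) \<le> KL/2 * \<alpha>^2" "1/2 * (v \<bullet> (C *v v)) \<le> KC/2 * \<beta>^2"
      using q1 q2 q4 q5 by auto
    have h2: "(lL * \<alpha>^2 + lC * \<beta>^2 + ki * \<gamma>^2) / 4 = 1/4 * (lL * \<alpha>^2) + 1/4 * (lC * \<beta>^2) + 1/4 * (ki * \<gamma>^2)"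
      "ki/2 * \<gamma>^2 = 1/2 * (ki * \<gamma>^2)" by auto
    show ?thesis unfolding \<alpha>_def[symmetric] \<beta>_def[symmetric] \<gamma>_def[symmetric] q3
      using w1 w2 w3 h1 h2 mm kk
        abs_ge_minus_self[of "e2 * ((L *v a) \<bullet> (B *v z))"] abs_ge_self[of "e2 * ((L *v a) \<bullet> (B *v z))"]
        abs_ge_minus_self[of "e1 * ((C *v v) \<bullet> (transpose \<Gamma> *v a))"] abs_ge_self[of "e1 * ((C *v v) \<bullet> (transpose \<Gamma> *v a))"]
      by linarith
  qed
  show ?thesis using ee m0 KW0 Dbound Wbound by blast
qed


lemma part_b:
  fixes L R :: "real^'s^'s" and C G :: "real^'r^'r" and \<Gamma> :: "real^'r^'s"
    and B :: "real^'m^'s" and Ibar :: "real^'s" and ki kd :: real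
  assumes L: "sym_pd L" and C: "sym_pd C" and R: "sym_psd R" and G: "sym_psd G"
    and B: "full_col_rank B"
    and kd: "kd > 0" and ki: "ki > 0"
    and hyp: "(sym_pd R \<and> sym_pd G) \<or> (sym_pd G \<and> full_col_rank (transpose \<Gamma>))"
    and tr: "cl_traj L C R G \<Gamma> B ki kd Ibar (\<lambda>_. 0) I V Ip Vp u"
  shows "((\<lambda>t. infdist (I t, V t, Ip t, Vp t, u t) (target_set B ki kd Ibar)) \<longlongrightarrow> 0) at_top"
proof -
  obtain e1 e2 \<delta> m KW where pos: "0 < \<delta>" "0 < m" "0 < KW"
    and Db: "\<And>(a::real^'s) (v::real^'r) (z::real^'m) a' v'.
       - (L *v a') = \<Gamma> *v v + R *v a - B *v (- (ki *\<^sub>R z) - kd *\<^sub>R (transpose B *v a)) \<Longrightarrow>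
       C *v v' = transpose \<Gamma> *v a - G *v v \<Longrightarrow>
       1/2 * (a \<bullet> (L *v a') + a' \<bullet> (L *v a)) + 1/2 * (v \<bullet> (C *v v') + v' \<bullet> (C *v v))
       + ki/2 * (z \<bullet> (transpose B *v a) + (transpose B *v a) \<bullet> z)
       + e2 * ((L *v a) \<bullet> (B *v (transpose B *v a)) + (L *v a') \<bullet> (B *v z))
       - e1 * ((C *v v) \<bullet> (transpose \<Gamma> *v a') + (C *v v') \<bullet> (transpose \<Gamma> *v a))
       \<le> - \<delta> * ((norm a)^2 + (norm v)^2 + (norm z)^2)"
    and Wb: "\<And>(a::real^'s) (v::real^'r) (z::real^'m).
       m * ((norm a)^2 + (norm v)^2 + (norm z)^2) \<le>
         1/2 * (a \<bullet> (L *v a)) + 1/2 * (v \<bullet> (C *v v)) + ki/2 * (z \<bullet> z)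
         + e2 * ((L *v a) \<bullet> (B *v z)) - e1 * ((C *v v) \<bullet> (transpose \<Gamma> *v a)) \<and>
       1/2 * (a \<bullet> (L *v a)) + 1/2 * (v \<bullet> (C *v v)) + ki/2 * (z \<bullet> z)
         + e2 * ((L *v a) \<bullet> (B *v z)) - e1 * ((C *v v) \<bullet> (transpose \<Gamma> *v a))
       \<le> KW * ((norm a)^2 + (norm v)^2 + (norm z)^2)"
    using vec_bounds[OF L C R G B kd ki hyp] by blast
  define z where "z = (\<lambda>\<tau>. transpose B *v (I \<tau> - Ibar))"
  define \<phi> where "\<phi> = (\<lambda>\<tau>. 1/2 * (Ip \<tau> \<bullet> (L *v Ip \<tau>)) + 1/2 * (Vp \<tau> \<bullet> (C *v Vp \<tau>)) + ki/2 * (z \<tau> \<bullet> z \<tau>)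
         + e2 * ((L *v Ip \<tau>) \<bullet> (B *v z \<tau>)) - e1 * ((C *v Vp \<tau>) \<bullet> (transpose \<Gamma> *v Ip \<tau>)))"
  define N where "N = (\<lambda>\<tau>. (norm (Ip \<tau>))^2 + (norm (Vp \<tau>))^2 + (norm (z \<tau>))^2)"
  have phiN: "m * N t \<le> \<phi> t" "\<phi> t \<le> KW * N t" for t
    using Wb[of "Ip t" "Vp t" "z t"] by (auto simp: \<phi>_def N_def)
  have N0: "0 \<le> N t" for t by (simp add: N_def)
  have deriv: "\<exists>D. (\<phi> has_real_derivative D) (at t within {0..}) \<and> D \<le> - \<delta> * N t" if t: "t \<ge> 0" for t
  proof -
    from tr t have dI: "(I has_vector_derivative Ip t) (at t within {0..})"
      unfolding cl_traj_def by auto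
    from tr t obtain Ipp where dIp: "(Ip has_vector_derivative Ipp) (at t within {0..})"
      and eI: "- (L *v Ipp) = \<Gamma> *v Vp t + R *v Ip t - B *v ctrl B ki kd Ibar 0 (I t) (Ip t)"
      unfolding cl_traj_def by blast
    from tr t obtain Vpp where dVp: "(Vp has_vector_derivative Vpp) (at t within {0..})"
      and eV: "C *v Vpp = transpose \<Gamma> *v Ip t - G *v Vp t"
      unfolding cl_traj_def by blast
    have dz: "(z has_vector_derivative transpose B *v Ip t) (at t within {0..})"
      unfolding z_def by (rule hvd_mat) (simp add: has_vector_derivative_diff_const dI)
    have ctrl0: "ctrl B ki kd Ibar 0 (I t) (Ip t) = - (ki *\<^sub>R z t) - kd *\<^sub>R (transpose B *v Ip t)"
      by (simp add: ctrl_def z_def)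
    have h1: "((\<lambda>\<tau>. Ip \<tau> \<bullet> (L *v Ip \<tau>)) has_real_derivative (Ip t \<bullet> (L *v Ipp) + Ipp \<bullet> (L *v Ip t))) (at t within {0..})"
      by (rule hvd_inner[OF dIp hvd_mat[OF dIp]]) simp
    have h2: "((\<lambda>\<tau>. Vp \<tau> \<bullet> (C *v Vp \<tau>)) has_real_derivative (Vp t \<bullet> (C *v Vpp) + Vpp \<bullet> (C *v Vp t))) (at t within {0..})"
      by (rule hvd_inner[OF dVp hvd_mat[OF dVp]]) simp
    have h3: "((\<lambda>\<tau>. z \<tau> \<bullet> z \<tau>) has_real_derivative (z t \<bullet> (transpose B *v Ip t) + (transpose B *v Ip t) \<bullet> z t)) (at t within {0..})"
      by (rule hvd_inner[OF dz dz]) simp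
    have h4: "((\<lambda>\<tau>. (L *v Ip \<tau>) \<bullet> (B *v z \<tau>)) has_real_derivative
        ((L *v Ip t) \<bullet> (B *v (transpose B *v Ip t)) + (L *v Ipp) \<bullet> (B *v z t))) (at t within {0..})"
      by (rule hvd_inner[OF hvd_mat[OF dIp] hvd_mat[OF dz]]) simp
    have h5: "((\<lambda>\<tau>. (C *v Vp \<tau>) \<bullet> (transpose \<Gamma> *v Ip \<tau>)) has_real_derivative
        ((C *v Vp t) \<bullet> (transpose \<Gamma> *v Ipp) + (C *v Vpp) \<bullet> (transpose \<Gamma> *v Ip t))) (at t within {0..})"
      by (rule hvd_inner[OF hvd_mat[OF dVp] hvd_mat[OF dIp]]) simp
    have hd: "(\<phi> has_real_derivative
       1/2 * (Ip t \<bullet> (L *v Ipp) + Ipp \<bullet> (L *v Ip t)) + 1/2 * (Vp t \<bullet> (C *v Vpp) + Vpp \<bullet> (C *v Vp t))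
       + ki/2 * (z t \<bullet> (transpose B *v Ip t) + (transpose B *v Ip t) \<bullet> z t)
       + e2 * ((L *v Ip t) \<bullet> (B *v (transpose B *v Ip t)) + (L *v Ipp) \<bullet> (B *v z t))
       - e1 * ((C *v Vp t) \<bullet> (transpose \<Gamma> *v Ipp) + (C *v Vpp) \<bullet> (transpose \<Gamma> *v Ip t))) (at t within {0..})"
      unfolding \<phi>_def by (intro DERIV_add DERIV_diff DERIV_cmult h1 h2 h3 h4 h5)
    have "1/2 * (Ip t \<bullet> (L *v Ipp) + Ipp \<bullet> (L *v Ip t)) + 1/2 * (Vp t \<bullet> (C *v Vpp) + Vpp \<bullet> (C *v Vp t))
       + ki/2 * (z t \<bullet> (transpose B *v Ip t) + (transpose B *v Ip t) \<bullet> z t)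
       + e2 * ((L *v Ip t) \<bullet> (B *v (transpose B *v Ip t)) + (L *v Ipp) \<bullet> (B *v z t))
       - e1 * ((C *v Vp t) \<bullet> (transpose \<Gamma> *v Ipp) + (C *v Vpp) \<bullet> (transpose \<Gamma> *v Ip t)) \<le> - \<delta> * N t"
      unfolding N_def by (rule Db[OF eI[unfolded ctrl0] eV])
    thus ?thesis using hd by blast
  qed
  define \<eta> where "\<eta> = \<delta> / KW"
  have eta: "0 < \<eta>" using pos by (simp add: \<eta>_def)
  define \<psi> where "\<psi> = (\<lambda>\<tau>. exp (\<eta> * \<tau>) * \<phi> \<tau>)"
  have dpsi: "\<exists>D. (\<psi> has_real_derivative D) (at t within {0..}) \<and> D \<le> 0" if t: "t \<ge> 0" for t
  proof -
    obtain D where D: "(\<phi> has_real_derivative D) (at t within {0..})" "D \<le> - \<delta> * N t"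
      using deriv[OF t] by blast
    have e: "((\<lambda>\<tau>. exp (\<eta> * \<tau>)) has_real_derivative exp (\<eta> * t) * \<eta>) (at t within {0..})"
      by (auto intro!: derivative_eq_intros)
    have hd: "(\<psi> has_real_derivative exp (\<eta> * t) * D + exp (\<eta> * t) * \<eta> * \<phi> t) (at t within {0..})"
      unfolding \<psi>_def using DERIV_mult[OF e D(1)] by (simp add: algebra_simps)
    have "\<eta> * \<phi> t \<le> \<delta> * N t"
    proof -
      have "\<eta> * \<phi> t \<le> \<eta> * (KW * N t)" using phiN(2)[of t] eta by (intro mult_left_mono) auto
      also have "\<dots> = \<delta> * N t" using pos by (simp add: \<eta>_def)
      finally show ?thesis .
    qed
    hence "D + \<eta> * \<phi> t \<le> 0" using D(2) by simp
    hence "exp (\<eta> * t) * (D + \<eta> * \<phi> t) \<le> 0" by (simp add: mult_nonneg_nonpos)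
    hence "exp (\<eta> * t) * D + exp (\<eta> * t) * \<eta> * \<phi> t \<le> 0" by (simp add: algebra_simps)
    thus ?thesis using hd by blast
  qed
  have cont: "continuous_on {0..} \<psi>"
    unfolding continuous_on_eq_continuous_within
    using dpsi DERIV_continuous by fastforce
  have decay: "\<psi> T \<le> \<psi> 0" if T: "T \<ge> 0" for T
  proof (rule DERIV_nonpos_imp_decreasing_open[OF T])
    fix x :: real assume x: "0 < x" "x < T"
    obtain D where D: "(\<psi> has_real_derivative D) (at x within {0..})" "D \<le> 0" using dpsi[of x] x by auto
    have "x \<in> interior {0..}" using x interior_Ici[of "-1" "0::real"] by simp
    hence "at x within {0..} = at x" by (rule at_within_interior)
    thus "\<exists>y. (\<psi> has_real_derivative y) (at x) \<and> y \<le> 0" using D by auto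
  next
    show "continuous_on {0..T} \<psi>" using cont by (rule continuous_on_subset) auto
  qed
  have Nb: "N t \<le> \<phi> 0 / m * exp (- \<eta> * t)" if t: "t \<ge> 0" for t
  proof -
    have "exp (\<eta> * t) * \<phi> t \<le> \<phi> 0" using decay[OF t] by (simp add: \<psi>_def)
    hence "\<phi> t \<le> \<phi> 0 * exp (- \<eta> * t)"
      by (simp add: exp_minus field_simps)
    hence "m * N t \<le> \<phi> 0 * exp (- \<eta> * t)" using phiN(1)[of t] by linarith
    thus ?thesis using pos by (simp add: field_simps)
  qed
  have "rank (transpose B) = CARD('m)" using B by (simp add: full_col_rank_def rank_transpose)
  hence "surj ((*v) (transpose B))" by (rule full_rank_surjective[THEN iffD1])
  then obtain P :: "real^'m^'s" where P: "transpose B ** P = mat 1"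
    using matrix_right_invertible_surjective[of "transpose B"] by auto
  have BP: "transpose B *v (P *v w) = w" for w
    by (simp add: matrix_vector_mul_assoc P)
  obtain Kg where Kg: "Kg > 0" "\<And>x. norm (P *v x) \<le> Kg * norm x" using mat_bound by blast
  have bound: "infdist (I t, V t, Ip t, Vp t, u t) (target_set B ki kd Ibar) \<le> (Kg + 2) * sqrt (N t)" for t
  proof -
    define y where "y = (I t - P *v z t, V t, 0::real^'s, 0::real^'r, u t)"
    have "transpose B *v (I t - P *v z t - Ibar) = 0"
    proof -
      have "I t - P *v z t - Ibar = (I t - Ibar) - P *v z t" by simp
      hence "transpose B *v (I t - P *v z t - Ibar) = z t - transpose B *v (P *v z t)"
        by (simp only: matrix_vector_mult_diff_distrib z_def)
      thus ?thesis by (metis BP diff_self)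
    qed
    hence yin: "y \<in> target_set B ki kd Ibar"
      by (simp add: y_def target_set_def ctrl_def)
    have "infdist (I t, V t, Ip t, Vp t, u t) (target_set B ki kd Ibar) \<le> dist (I t, V t, Ip t, Vp t, u t) y"
      by (rule infdist_le[OF yin])
    also have "\<dots> = norm (P *v z t, 0::real^'r, Ip t, Vp t, 0::real^'m)"
      by (simp add: y_def dist_norm)
    also have "\<dots> \<le> norm (P *v z t) + (norm (0::real^'r) + (norm (Ip t) + (norm (Vp t) + norm (0::real^'m))))"
      by (meson add_left_mono norm_Pair_le order_trans)
    also have "\<dots> \<le> Kg * norm (z t) + norm (Ip t) + norm (Vp t)" using Kg(2)[of "z t"] by simp
    also have "\<dots> \<le> Kg * sqrt (N t) + sqrt (N t) + sqrt (N t)"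
    proof -
      have s: "norm x \<le> sqrt (N t)" if "(norm x)^2 \<le> N t" for x :: "'z::real_normed_vector"
        using real_sqrt_le_mono[OF that] by simp
      have "norm (z t) \<le> sqrt (N t)" "norm (Ip t) \<le> sqrt (N t)" "norm (Vp t) \<le> sqrt (N t)"
        by (rule s; simp add: N_def)+
      thus ?thesis using Kg(1) by (smt (verit) mult_left_mono)
    qed
    finally show ?thesis by (simp add: algebra_simps)
  qed
  have lim_exp: "((\<lambda>t. exp (- \<eta> * t)) \<longlongrightarrow> 0) at_top"
  proof -
    have "filterlim (\<lambda>t::real. (- \<eta>) * t) at_bot at_top"
      using filterlim_tendsto_neg_mult_at_bot[OF tendsto_const[of "- \<eta>"] _ filterlim_ident] eta by simp
    from filterlim_compose[OF exp_at_bot this] show ?thesis by simp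
  qed
  have lim: "((\<lambda>t. (Kg + 2) * sqrt (\<phi> 0 / m * exp (- \<eta> * t))) \<longlongrightarrow> 0) at_top"
    using tendsto_mult[OF tendsto_const[of "Kg + 2"] tendsto_real_sqrt[OF tendsto_mult[OF tendsto_const[of "\<phi> 0 / m"] lim_exp]]]
    by simp
  show ?thesis
  proof (rule Lim_null_comparison[OF _ lim])
    show "\<forall>\<^sub>F t in at_top. norm (infdist (I t, V t, Ip t, Vp t, u t) (target_set B ki kd Ibar))
        \<le> (Kg + 2) * sqrt (\<phi> 0 / m * exp (- \<eta> * t))"
      using eventually_ge_at_top[of "0::real"]
    proof eventually_elim
      case (elim t)
      have "norm (infdist (I t, V t, Ip t, Vp t, u t) (target_set B ki kd Ibar))
          = infdist (I t, V t, Ip t, Vp t, u t) (target_set B ki kd Ibar)" by (simp add: infdist_nonneg)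
      also have "\<dots> \<le> (Kg + 2) * sqrt (N t)" by (rule bound)
      also have "\<dots> \<le> (Kg + 2) * sqrt (\<phi> 0 / m * exp (- \<eta> * t))"
        using Nb[OF elim] Kg(1) by (intro mult_left_mono real_sqrt_le_mono) auto
      finally show ?case .
    qed
  qed
qed

theorem theorem1:
  fixes L R :: "real^'s^'s" and C G :: "real^'r^'r" and \<Gamma> :: "real^'r^'s"
    and B :: "real^'m^'s" and Vstar :: "real^'r" and ubar :: "real^'m" and Ibar :: "real^'s"
    and ki kd :: real
  assumes L: "sym_pd L" and C: "sym_pd C"
    and R: "sym_psd R" and G: "sym_psd G"
    and B: "full_col_rank B"
    and Vstar: "\<forall>j. Vstar $ j \<ge> 0"
    and eq1: "0 = \<Gamma> *v Vstar + R *v Ibar - B *v ubar"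
    and eq2: "0 = transpose \<Gamma> *v Ibar - G *v Vstar"
    and kd: "kd > 0" and ki: "ki > 0"
  shows
    "(\<exists>S :: real^'s \<Rightarrow> real^'r \<Rightarrow> real^'s \<Rightarrow> real^'r \<Rightarrow> real^'m \<Rightarrow> real.
        (\<forall>I V Ip Vp u. S I V Ip Vp u \<ge> 0) \<and>
        (\<forall>mu I V Ip Vp u t. cl_traj L C R G \<Gamma> B ki kd Ibar mu I V Ip Vp u \<and> t \<ge> 0 \<longrightarrow>
           (\<exists>D. ((\<lambda>\<tau>. S (I \<tau>) (V \<tau>) (Ip \<tau>) (Vp \<tau>) (u \<tau>)) has_real_derivative D) (at t within {0..}) \<and>
                D \<le> mu t \<bullet> out_y B (Ip t))))
     \<and>
     (((sym_pd R \<and> sym_pd G) \<or> (sym_pd G \<and> full_col_rank (transpose \<Gamma>))) \<longrightarrow>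
        (\<forall>I V Ip Vp u. cl_traj L C R G \<Gamma> B ki kd Ibar (\<lambda>_. 0) I V Ip Vp u \<longrightarrow>
           ((\<lambda>t. infdist (I t, V t, Ip t, Vp t, u t) (target_set B ki kd Ibar)) \<longlongrightarrow> 0) at_top))"
proof (intro conjI)
  show "\<exists>S :: real^'s \<Rightarrow> real^'r \<Rightarrow> real^'s \<Rightarrow> real^'r \<Rightarrow> real^'m \<Rightarrow> real.
        (\<forall>I V Ip Vp u. S I V Ip Vp u \<ge> 0) \<and>
        (\<forall>mu I V Ip Vp u t. cl_traj L C R G \<Gamma> B ki kd Ibar mu I V Ip Vp u \<and> t \<ge> 0 \<longrightarrow>
           (\<exists>D. ((\<lambda>\<tau>. S (I \<tau>) (V \<tau>) (Ip \<tau>) (Vp \<tau>) (u \<tau>)) has_real_derivative D) (at t within {0..}) \<and>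
                D \<le> mu t \<bullet> out_y B (Ip t)))"
    by (rule part_a[OF L C R G kd ki])
next
  show "((sym_pd R \<and> sym_pd G) \<or> (sym_pd G \<and> full_col_rank (transpose \<Gamma>))) \<longrightarrow>
        (\<forall>I V Ip Vp u. cl_traj L C R G \<Gamma> B ki kd Ibar (\<lambda>_. 0) I V Ip Vp u \<longrightarrow>
           ((\<lambda>t. infdist (I t, V t, Ip t, Vp t, u t) (target_set B ki kd Ibar)) \<longlongrightarrow> 0) at_top)"
    using part_b[OF L C R G B kd ki] by blast
qed

end
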